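(* In the algebra $\mathcal Y_d$ the following hold for all $r,s\ge0$: $[a_r,a_s]=0$; $[a_1,b_s]=b_s$; $[a_{r+1},b_s]-[a_r,b_{s+1}]=b_{r+s}-\sum_{t=0}^{r-1}b_{r+s-t-1}a_t$; $[b_{r+1},b_s]-[b_r,b_{s+1}]=b_rb_s+b_sb_r$.
   Context: Let $V=\mathbb C^d$ and $\mathfrak a=(\mathfrak{gl}(V)\ltimes V)\oplus(\mathfrak{gl}(V)\ltimes V^* )$ with basis $e_{ij}$, $e'_{ij}$ (standard matrix units of the two copies of $\mathfrak{gl}(V)$), $q_i$ (basis of $V$), $p_i$ (basis of $V^*$), brackets: standard $\mathfrak{gl}$ brackets among the $e$'s and among the $e'$'s, $[e_{ij},q_k]=\delta_{jk}q_i$, $[e'_{ij},p_k]=-\delta_{ki}p_j$, all other brackets of basis elements zero. Let $\mathfrak{gl}(V)_{\rm diag}$ be spanned by $e_{ij}+e'_{ij}$ and $\mathcal Y_d:=\big(U(\mathfrak a)/U(\mathfrak a)\mathfrak{gl}(V)_{\rm diag}\big)^{\mathfrak{gl}(V)_{\rm diag}}$ (an algebra, the quantum Hamiltonian reduction). Define in $\mathcal Y_d$ the images of $a_r=\sum_{i_1,\dots,i_r}e_{i_1i_2}e_{i_2i_3}\cdots e_{i_ri_1}$ ($r\ge1$), $a_0=d$, and $b_s=\sum_{i_1,\dots,i_{s+1}}p_{i_1}e_{i_1i_2}\cdots e_{i_si_{s+1}}q_{i_{s+1}}$ ($s\ge0$). *)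

theory Defs
  imports Complex_Main "HOL-Library.Function_Algebras"
begin

text \<open>Basis of the Lie algebra a = (gl(V) x| V) (+) (gl(V) x| V*), V = C^d,
  indices 0..d-1.  E i j = e_ij, E' i j = e'_ij, Q k = q_k, P k = p_k.\<close>
datatype gen = E nat nat | E' nat nat | Q nat | P nat

fun valid_gen :: "nat \<Rightarrow> gen \<Rightarrow> bool" where
  "valid_gen d (E i j) = (i < d \<and> j < d)"
| "valid_gen d (E' i j) = (i < d \<and> j < d)"
| "valid_gen d (Q k) = (k < d)"
| "valid_gen d (P k) = (k < d)"

text \<open>The free associative algebra T(a) on the basis: elements are coefficient
  functions on words (only finitely supported ones are reached below).\<close>
type_synonym tens = "gen list \<Rightarrow> complex"

definition mon :: "gen list \<Rightarrow> tens" where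
  "mon u = (\<lambda>w. if w = u then 1 else 0)"

definition tmult :: "tens \<Rightarrow> tens \<Rightarrow> tens" (infixl "\<cdot>" 70) where
  "tmult p q = (\<lambda>w. \<Sum>k\<le>length w. p (take k w) * q (drop k w))"

definition tscale :: "complex \<Rightarrow> tens \<Rightarrow> tens" where
  "tscale c p = (\<lambda>w. c * p w)"

definition kd :: "nat \<Rightarrow> nat \<Rightarrow> complex" where
  "kd i j = (if i = j then 1 else 0)"

fun lie :: "gen \<Rightarrow> gen \<Rightarrow> tens" where
  "lie (E i j) (E k l) = tscale (kd j k) (mon [E i l]) - tscale (kd l i) (mon [E k j])"
| "lie (E' i j) (E' k l) = tscale (kd j k) (mon [E' i l]) - tscale (kd l i) (mon [E' k j])"
| "lie (E i j) (Q k) = tscale (kd j k) (mon [Q i])"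
| "lie (Q k) (E i j) = - tscale (kd j k) (mon [Q i])"
| "lie (E' i j) (P k) = - tscale (kd k i) (mon [P j])"
| "lie (P k) (E' i j) = tscale (kd k i) (mon [P j])"
| "lie _ _ = 0"

definition rel :: "gen \<Rightarrow> gen \<Rightarrow> tens" where
  "rel x y = mon [x, y] - mon [y, x] - lie x y"

definition hdiag :: "nat \<Rightarrow> nat \<Rightarrow> tens" where
  "hdiag i j = mon [E i j] + mon [E' i j]"

text \<open>Preimage in T(a) of the left ideal U(a) gl(V)_diag of U(a):
  the two-sided ideal of PBW relations plus the left ideal generated by
  e_ij + e'_ij.\<close>
inductive_set qhr_ideal :: "nat \<Rightarrow> tens set" for d :: nat where
  zero: "0 \<in> qhr_ideal d"
| add: "p \<in> qhr_ideal d \<Longrightarrow> q \<in> qhr_ideal d \<Longrightarrow> p + q \<in> qhr_ideal d"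
| scale: "p \<in> qhr_ideal d \<Longrightarrow> tscale c p \<in> qhr_ideal d"
| pbw: "valid_gen d x \<Longrightarrow> valid_gen d y \<Longrightarrow> list_all (valid_gen d) u \<Longrightarrow>
        list_all (valid_gen d) v \<Longrightarrow> mon u \<cdot> rel x y \<cdot> mon v \<in> qhr_ideal d"
| diag: "i < d \<Longrightarrow> j < d \<Longrightarrow> list_all (valid_gen d) u \<Longrightarrow>
        mon u \<cdot> hdiag i j \<in> qhr_ideal d"

text \<open>Equality in the quantum Hamiltonian reduction Y_d (of representatives).\<close>
definition Yeq :: "nat \<Rightarrow> tens \<Rightarrow> tens \<Rightarrow> bool" where
  "Yeq d p q \<longleftrightarrow> p - q \<in> qhr_ideal d"

definition tcomm :: "tens \<Rightarrow> tens \<Rightarrow> tens" where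
  "tcomm p q = p \<cdot> q - q \<cdot> p"

definition idx :: "nat \<Rightarrow> nat \<Rightarrow> nat list set" where
  "idx d n = {is. length is = n \<and> (\<forall>i\<in>set is. i < d)}"

definition a_el :: "nat \<Rightarrow> nat \<Rightarrow> tens" where
  "a_el d r = (if r = 0 then tscale (of_nat d) (mon [])
     else (\<Sum>is\<in>idx d r. mon (map (\<lambda>k. E (is ! k) (is ! ((k + 1) mod r))) [0..<r])))"

definition b_el :: "nat \<Rightarrow> nat \<Rightarrow> tens" where
  "b_el d s = (\<Sum>is\<in>idx d (Suc s).
     mon ([P (is ! 0)] @ map (\<lambda>k. E (is ! k) (is ! (k + 1))) [0..<s] @ [Q (is ! s)]))"

end

theory Submission
  imports Defs
begin


lemma tmult_assoc: "tmult (tmult p q) r = tmult p (tmult q r)"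
proof (rule ext)
  fix w :: "gen list"
  define n where "n = length w"
  define g where "g = (\<lambda>j m. p (take j w) * q (take m (drop j w)) * r (drop (j+m) w))"
  have L: "tmult (tmult p q) r w = (\<Sum>k\<le>n. \<Sum>j\<le>k. g j (k - j))"
    unfolding tmult_def n_def g_def
    by (auto simp: sum_distrib_right min_def take_drop intro!: sum.cong)
  have R: "tmult p (tmult q r) w = (\<Sum>j\<le>n. \<Sum>m\<le>n-j. g j m)"
    unfolding tmult_def n_def g_def
    by (auto simp: sum_distrib_left mult.assoc add.commute intro!: sum.cong)
  have "(\<Sum>j\<le>n. \<Sum>m\<le>n-j. g j m) = (\<Sum>(j,m)\<in>{(j,m). j+m \<le> n}. g j m)"
    by (subst sum.Sigma) (auto intro!: sum.cong)
  also have "\<dots> = (\<Sum>k\<le>n. \<Sum>j\<le>k. g j (k - j))" by (rule sum.triangle_reindex_eq)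
  finally show "tmult (tmult p q) r w = tmult p (tmult q r) w" using L R by simp
qed

lemma tmult_distL: "tmult (p + q) r = tmult p r + tmult q r"
  unfolding tmult_def by (auto simp: distrib_right sum.distrib)
lemma tmult_distR: "tmult p (q + r) = tmult p q + tmult p r"
  unfolding tmult_def by (auto simp: distrib_left sum.distrib)
lemma tmult_one_left: "tmult (mon []) p = p"
proof (rule ext)
  fix w :: "gen list"
  have "(\<Sum>k\<le>length w. mon [] (take k w) * p (drop k w)) = (\<Sum>k\<in>{0}. mon [] (take k w) * p (drop k w))"
    by (rule sum.mono_neutral_right) (auto simp: mon_def)
  then show "tmult (mon []) p w = p w" by (simp add: tmult_def mon_def)
qed
lemma tmult_one_right: "tmult p (mon []) = p"
proof (rule ext)
  fix w :: "gen list"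
  have "(\<Sum>k\<le>length w. p (take k w) * mon [] (drop k w)) = (\<Sum>k\<in>{length w}. p (take k w) * mon [] (drop k w))"
    by (rule sum.mono_neutral_right) (auto simp: mon_def)
  then show "tmult p (mon []) w = p w" by (simp add: tmult_def mon_def)
qed
lemma tmult_zero_left: "tmult 0 p = 0" unfolding tmult_def by auto
lemma tmult_zero_right: "tmult p 0 = 0" unfolding tmult_def by auto

lemma mon_append: "tmult (mon u) (mon v) = mon (u @ v)"
proof (rule ext)
  fix w :: "gen list"
  show "tmult (mon u) (mon v) w = mon (u @ v) w"
  proof (cases "w = u @ v")
    case True
    have "(\<Sum>k\<le>length w. mon u (take k w) * mon v (drop k w)) = (\<Sum>k\<in>{length u}. mon u (take k w) * mon v (drop k w))"
    proof (rule sum.mono_neutral_right)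
      show "\<forall>i\<in>{..length w} - {length u}. mon u (take i w) * mon v (drop i w) = 0"
      proof
        fix i assume i: "i \<in> {..length w} - {length u}"
        have "take i w \<noteq> u"
        proof
          assume "take i w = u"
          then have "length (take i w) = length u" by simp
          with i show False by (auto simp: True)
        qed
        then show "mon u (take i w) * mon v (drop i w) = 0" by (simp add: mon_def)
      qed
    qed (auto simp: True)
    then show ?thesis by (simp add: tmult_def mon_def True)
  next
    case False
    then have "\<forall>k. \<not> (take k w = u \<and> drop k w = v)" by (metis append_take_drop_id)
    then show ?thesis unfolding tmult_def mon_def using False by (auto intro!: sum.neutral)
  qed
qed

typedef nc = "UNIV :: tens set" by auto
setup_lifting type_definition_nc

instantiation nc :: ring_1
begin
lift_definition zero_nc :: nc is "0" .
lift_definition one_nc :: nc is "mon []" .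
lift_definition plus_nc :: "nc \<Rightarrow> nc \<Rightarrow> nc" is "(+)" .
lift_definition minus_nc :: "nc \<Rightarrow> nc \<Rightarrow> nc" is "(-)" .
lift_definition uminus_nc :: "nc \<Rightarrow> nc" is "uminus" .
lift_definition times_nc :: "nc \<Rightarrow> nc \<Rightarrow> nc" is "tmult" .
instance
proof
  show "(0::nc) \<noteq> 1"
  proof
    assume "(0::nc) = 1"
    then have "Rep_nc 0 [] = Rep_nc 1 []" by simp
    then show False by (simp add: zero_nc.rep_eq one_nc.rep_eq mon_def)
  qed
qed (transfer, simp add: algebra_simps tmult_assoc tmult_distL tmult_distR
     tmult_one_left tmult_one_right)+
end

lift_definition monn :: "gen list \<Rightarrow> nc" is mon .
lift_definition smul :: "complex \<Rightarrow> nc \<Rightarrow> nc" is tscale .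

lemma monn_append: "monn (u @ v) = monn u * monn v"
  by transfer (simp add: mon_append)
lemma monn_Nil: "monn [] = 1" by transfer simp
lemma monn_Cons: "monn (x # u) = monn [x] * monn u"
  using monn_append[of "[x]" u] by simp

lemma Rep_nc_sum: "Rep_nc (sum f A) = (\<Sum>x\<in>A. Rep_nc (f x))"
  by (induction A rule: infinite_finite_induct) (auto simp: zero_nc.rep_eq plus_nc.rep_eq)
lemma smul_half: "smul (1/2) (x + x) = x"
  by transfer (auto simp: tscale_def fun_eq_iff)
lemma smul_minus: "smul (-1) x = - x"
  by transfer (auto simp: tscale_def fun_eq_iff)

lemma tscale_tmult_left: "tmult (tscale c p) q = tscale c (tmult p q)"
  unfolding tmult_def tscale_def by (auto simp: sum_distrib_left mult.assoc)
lemma tscale_tmult_right: "tmult p (tscale c q) = tscale c (tmult p q)"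
  unfolding tmult_def tscale_def by (auto simp: sum_distrib_left mult.left_commute)
lemma smul_mult_left: "smul c x * y = smul c (x * y)"
  by transfer (simp add: tscale_tmult_left)
lemma smul_mult_right: "x * smul c y = smul c (x * y)"
  by transfer (simp add: tscale_tmult_right)

lift_definition reln :: "gen \<Rightarrow> gen \<Rightarrow> nc" is rel .
lift_definition lien :: "gen \<Rightarrow> gen \<Rightarrow> nc" is lie .

lemma reln_eq: "reln x y = monn [x] * monn [y] - monn [y] * monn [x] - lien x y"
  by transfer (simp add: rel_def mon_append)

inductive_set Jn :: "nat \<Rightarrow> nc set" for d :: nat where
  zero: "0 \<in> Jn d"
| add: "x \<in> Jn d \<Longrightarrow> y \<in> Jn d \<Longrightarrow> x + y \<in> Jn d"
| smul: "x \<in> Jn d \<Longrightarrow> smul c x \<in> Jn d"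
| pbw: "valid_gen d x \<Longrightarrow> valid_gen d y \<Longrightarrow> list_all (valid_gen d) u \<Longrightarrow>
        list_all (valid_gen d) v \<Longrightarrow> monn u * reln x y * monn v \<in> Jn d"

lemma Jn_qhr: "x \<in> Jn d \<Longrightarrow> Rep_nc x \<in> qhr_ideal d"
proof (induction rule: Jn.induct)
  case zero then show ?case by (metis zero_nc.rep_eq qhr_ideal.zero)
next
  case (add x y) then show ?case by (metis plus_nc.rep_eq qhr_ideal.add)
next
  case (smul x c) then show ?case by (metis smul.rep_eq qhr_ideal.scale)
next
  case (pbw x y u v) then show ?case
    by (simp add: times_nc.rep_eq monn.rep_eq reln.rep_eq qhr_ideal.pbw)
qed

inductive vp :: "nat \<Rightarrow> nc \<Rightarrow> bool" for d :: nat where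
  mon: "list_all (valid_gen d) u \<Longrightarrow> vp d (monn u)"
| zero: "vp d 0"
| add: "vp d x \<Longrightarrow> vp d y \<Longrightarrow> vp d (x + y)"
| neg: "vp d x \<Longrightarrow> vp d (- x)"
| mul: "vp d x \<Longrightarrow> vp d y \<Longrightarrow> vp d (x * y)"

lemma Jn_neg: "x \<in> Jn d \<Longrightarrow> - x \<in> Jn d"
  using Jn.smul[of x d "-1"] by (simp add: smul_minus)
lemma Jn_diff: "x \<in> Jn d \<Longrightarrow> y \<in> Jn d \<Longrightarrow> x - y \<in> Jn d"
  using Jn.add[OF _ Jn_neg, of x d y] by (simp only: diff_conv_add_uminus)

lemma Jn_monn_left: "x \<in> Jn d \<Longrightarrow> list_all (valid_gen d) w \<Longrightarrow> monn w * x \<in> Jn d"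
proof (induction rule: Jn.induct)
  case zero then show ?case by (simp add: Jn.zero)
next
  case (add x y) then show ?case by (simp add: distrib_left Jn.add)
next
  case (smul x c) then show ?case by (simp add: smul_mult_right Jn.smul)
next
  case (pbw x y u v)
  have "monn w * (monn u * reln x y * monn v) = monn (w @ u) * reln x y * monn v"
    by (simp add: monn_append mult.assoc)
  then show ?case using pbw by (simp add: Jn.pbw)
qed

lemma Jn_monn_right: "x \<in> Jn d \<Longrightarrow> list_all (valid_gen d) w \<Longrightarrow> x * monn w \<in> Jn d"
proof (induction rule: Jn.induct)
  case zero then show ?case by (simp add: Jn.zero)
next
  case (add x y) then show ?case by (simp add: distrib_right Jn.add)
next
  case (smul x c) then show ?case by (simp add: smul_mult_left Jn.smul)
next
  case (pbw x y u v)
  have "monn u * reln x y * monn v * monn w = monn u * reln x y * monn (v @ w)"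
    by (simp add: monn_append mult.assoc)
  then show ?case using pbw by (simp add: Jn.pbw)
qed

lemma Jn_vp_left: "vp d z \<Longrightarrow> x \<in> Jn d \<Longrightarrow> z * x \<in> Jn d"
proof (induction arbitrary: x rule: vp.induct)
  case (mon u) then show ?case by (simp add: Jn_monn_left)
next
  case zero then show ?case by (simp add: Jn.zero)
next
  case (add a b) then show ?case by (simp add: distrib_right Jn.add)
next
  case (neg a) then show ?case by (simp add: Jn_neg)
next
  case (mul a b) then show ?case by (simp add: mult.assoc)
qed

lemma Jn_vp_right: "vp d z \<Longrightarrow> x \<in> Jn d \<Longrightarrow> x * z \<in> Jn d"
proof (induction arbitrary: x rule: vp.induct)
  case (mon u) then show ?case by (simp add: Jn_monn_right)
next
  case zero then show ?case by (simp add: Jn.zero)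
next
  case (add a b) then show ?case by (simp add: distrib_left Jn.add)
next
  case (neg a) then show ?case by (simp add: Jn_neg)
next
  case (mul a b) then show ?case by (metis mult.assoc)
qed

lemma vp_one[simp,intro]: "vp d 1" using vp.mon[of d "[]"] by (simp add: monn_Nil)
lemma vp_diff[intro]: "vp d x \<Longrightarrow> vp d y \<Longrightarrow> vp d (x - y)"
  using vp.add[OF _ vp.neg, of d x y] by (simp only: diff_conv_add_uminus)
lemma vp_sum[intro]: "(\<And>i. i \<in> A \<Longrightarrow> vp d (f i)) \<Longrightarrow> vp d (sum f A)"
  by (induction A rule: infinite_finite_induct) (auto intro: vp.zero vp.add)
lemma vp_of_nat[intro]: "vp d (of_nat n)"
  by (induction n) (auto intro: vp.zero vp.add)
lemma vp_if[intro]: "vp d x \<Longrightarrow> vp d (if b then x else 0)"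
  by (auto intro: vp.zero)
lemmas vp_basic[intro] = vp.zero vp.add vp.neg vp.mul

definition cgr :: "nat \<Rightarrow> nc \<Rightarrow> nc \<Rightarrow> bool" where
  "cgr d x y \<longleftrightarrow> vp d x \<and> vp d y \<and> x - y \<in> Jn d"

lemma cgr_refl: "vp d x \<Longrightarrow> cgr d x x" by (simp add: cgr_def Jn.zero)
lemma cgr_eqI: "x = y \<Longrightarrow> vp d x \<Longrightarrow> cgr d x y" by (simp add: cgr_def Jn.zero)
lemma cgr_sym: "cgr d x y \<Longrightarrow> cgr d y x"
proof -
  assume a: "cgr d x y"
  have "y - x = - (x - y)" by simp
  then show ?thesis using a Jn_neg unfolding cgr_def by metis
qed
lemma cgr_trans[trans]: "cgr d x y \<Longrightarrow> cgr d y z \<Longrightarrow> cgr d x z"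
proof -
  assume a: "cgr d x y" "cgr d y z"
  have "x - z = (x - y) + (y - z)" by simp
  then show ?thesis using a Jn.add unfolding cgr_def by metis
qed
lemma cgr_add: "cgr d x y \<Longrightarrow> cgr d x' y' \<Longrightarrow> cgr d (x + x') (y + y')"
proof -
  assume a: "cgr d x y" "cgr d x' y'"
  have "(x + x') - (y + y') = (x - y) + (x' - y')" by simp
  then show ?thesis using a Jn.add vp.add unfolding cgr_def by metis
qed
lemma cgr_neg: "cgr d x y \<Longrightarrow> cgr d (- x) (- y)"
proof -
  assume a: "cgr d x y"
  have "(- x) - (- y) = - (x - y)" by simp
  then show ?thesis using a Jn_neg vp.neg unfolding cgr_def by metis
qed
lemma cgr_diff: "cgr d x y \<Longrightarrow> cgr d x' y' \<Longrightarrow> cgr d (x - x') (y - y')"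
  using cgr_add[OF _ cgr_neg] by (simp only: diff_conv_add_uminus)
lemma cgr_mult: "cgr d x y \<Longrightarrow> cgr d x' y' \<Longrightarrow> cgr d (x * x') (y * y')"
proof -
  assume a: "cgr d x y" "cgr d x' y'"
  have "x * x' - y * y' = (x - y) * x' + y * (x' - y')" by (simp add: algebra_simps)
  moreover have "(x - y) * x' \<in> Jn d" using a by (simp add: cgr_def Jn_vp_right)
  moreover have "y * (x' - y') \<in> Jn d" using a by (simp add: cgr_def Jn_vp_left)
  ultimately show ?thesis using a by (auto simp: cgr_def intro: Jn.add)
qed
lemma cgr_sum: "(\<And>i. i \<in> A \<Longrightarrow> cgr d (f i) (g i)) \<Longrightarrow> cgr d (sum f A) (sum g A)"
  by (induction A rule: infinite_finite_induct) (auto intro: cgr_add cgr_refl)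
lemma cgr_half: "cgr d (x + x) 0 \<Longrightarrow> vp d x \<Longrightarrow> cgr d x 0"
  unfolding cgr_def using Jn.smul[of "x + x" d "1/2"] by (simp add: smul_half)
lemma cgr_vp: "cgr d x y \<Longrightarrow> vp d x" "cgr d x y \<Longrightarrow> vp d y" by (auto simp: cgr_def)

lemma cgr_rel: "valid_gen d x \<Longrightarrow> valid_gen d y \<Longrightarrow> vp d (lien x y) \<Longrightarrow>
   cgr d (monn [x] * monn [y]) (monn [y] * monn [x] + lien x y)"
proof -
  assume a: "valid_gen d x" "valid_gen d y" "vp d (lien x y)"
  have "monn [] * reln x y * monn [] \<in> Jn d" using a by (intro Jn.pbw) auto
  then have r: "reln x y \<in> Jn d" by (simp add: monn_Nil)
  have e: "monn [x] * monn [y] - (monn [y] * monn [x] + lien x y) = reln x y"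
    by (simp add: reln_eq diff_diff_eq)
  have "vp d (monn [x])" "vp d (monn [y])" using a by (auto intro: vp.mon)
  then show ?thesis using a r e unfolding cgr_def by (metis vp.mul vp.add)
qed

definition ee :: "nat \<Rightarrow> nat \<Rightarrow> nc" where "ee i j = monn [E i j]"
definition qq :: "nat \<Rightarrow> nc" where "qq k = monn [Q k]"
definition pp :: "nat \<Rightarrow> nc" where "pp k = monn [P k]"

lemma lien_EE: "lien (E i j) (E k l) = (if j = k then ee i l else 0) - (if l = i then ee k j else 0)"
  unfolding ee_def by transfer (auto simp: tscale_def kd_def fun_eq_iff)
lemma lien_EQ: "lien (E i j) (Q k) = (if j = k then qq i else 0)"
  unfolding qq_def by transfer (auto simp: tscale_def kd_def fun_eq_iff)
lemma lien_PE: "lien (P k) (E i j) = 0"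
  by transfer (simp add: zero_nc_def)



definition comm :: "nc \<Rightarrow> nc \<Rightarrow> nc" where "comm x y = x * y - y * x"

fun MM :: "nat \<Rightarrow> nat \<Rightarrow> nat \<Rightarrow> nat \<Rightarrow> nc" where
  "MM d 0 i j = (if i = j then 1 else 0)"
| "MM d (Suc r) i j = (\<Sum>l<d. ee i l * MM d r l j)"

definition VV :: "nat \<Rightarrow> nat \<Rightarrow> nat \<Rightarrow> nc" where
  "VV d m i = (\<Sum>j<d. MM d m i j * qq j)"
definition AA :: "nat \<Rightarrow> nat \<Rightarrow> nc" where
  "AA d r = (\<Sum>i<d. MM d r i i)"
definition BB :: "nat \<Rightarrow> nat \<Rightarrow> nc" where
  "BB d s = (\<Sum>i<d. pp i * VV d s i)"

lemma comm_mult_right: "comm x (y * z) = y * comm x z + comm x y * z"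
  unfolding comm_def by (simp add: algebra_simps)
lemma comm_mult_left: "comm (x * y) z = x * comm y z + comm x z * y"
  unfolding comm_def by (simp add: algebra_simps)
lemma comm_sum_right: "comm x (sum f A) = (\<Sum>i\<in>A. comm x (f i))"
  unfolding comm_def by (simp add: sum_distrib_left sum_distrib_right sum_subtractf)
lemma comm_sum_left: "comm (sum f A) x = (\<Sum>i\<in>A. comm (f i) x)"
  unfolding comm_def by (simp add: sum_distrib_left sum_distrib_right sum_subtractf)
lemma comm_anti: "comm x y = - comm y x" unfolding comm_def by simp
lemma comm_scalar_right: "comm x (if b then 1 else 0) = 0" unfolding comm_def by simp
lemma comm_scalar_left: "comm (if b then 1 else 0) x = 0" unfolding comm_def by simp

locale Y = fixes d :: nat
begin

abbreviation ceq (infix "\<approx>" 50) where "x \<approx> y \<equiv> cgr d x y"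
abbreviation "M \<equiv> MM d"
abbreviation "V \<equiv> VV d"
abbreviation "Aa \<equiv> AA d"
abbreviation "Bb \<equiv> BB d"

lemma vpE[intro,simp]: "i < d \<Longrightarrow> j < d \<Longrightarrow> vp d (ee i j)"
  unfolding ee_def by (rule vp.mon) simp
lemma vpQ[intro,simp]: "i < d \<Longrightarrow> vp d (qq i)"
  unfolding qq_def by (rule vp.mon) simp
lemma vpP[intro,simp]: "i < d \<Longrightarrow> vp d (pp i)"
  unfolding pp_def by (rule vp.mon) simp
lemma vpM[intro,simp]: "i < d \<Longrightarrow> vp d (M r i j)"
  by (induction r arbitrary: i) (auto intro!: vp_sum vp.mul)
lemma vpV[intro,simp]: "i < d \<Longrightarrow> vp d (V m i)"
  unfolding VV_def by (auto intro!: vp_sum vp.mul)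
lemma vpA[intro,simp]: "vp d (Aa r)"
  unfolding AA_def by (auto intro!: vp_sum)
lemma vpB[intro,simp]: "vp d (Bb r)"
  unfolding BB_def by (auto intro!: vp_sum vp.mul)
lemma vp_comm[intro,simp]: "vp d x \<Longrightarrow> vp d y \<Longrightarrow> vp d (comm x y)"
  unfolding comm_def by auto
lemma vp_if0[intro,simp]: "vp d x \<Longrightarrow> vp d (if b then x else 0)" by auto
lemma vp_times[intro,simp]: "vp d x \<Longrightarrow> vp d y \<Longrightarrow> vp d (x * y)" by (rule vp.mul)
lemma vp_plus[intro,simp]: "vp d x \<Longrightarrow> vp d y \<Longrightarrow> vp d (x + y)" by (rule vp.add)
lemma vp_minus[intro,simp]: "vp d x \<Longrightarrow> vp d y \<Longrightarrow> vp d (x - y)" by (rule vp_diff)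
lemma vp_uminus[intro,simp]: "vp d x \<Longrightarrow> vp d (- x)" by (rule vp.neg)
lemma vp_zero[intro,simp]: "vp d 0" by (rule vp.zero)
lemma vp_sum'[intro,simp]: "(\<And>i. i \<in> A \<Longrightarrow> vp d (f i)) \<Longrightarrow> vp d (sum f A)" by (rule vp_sum)

lemma cgr_commI: "x \<approx> x' \<Longrightarrow> y \<approx> y' \<Longrightarrow> comm x y \<approx> comm x' y'"
  unfolding comm_def by (intro cgr_diff cgr_mult)
lemma ceq_refl[intro,simp]: "vp d x \<Longrightarrow> x \<approx> x" by (rule cgr_refl)

lemma cgr_L: "comm x z \<approx> c1 \<Longrightarrow> comm x y \<approx> c2 \<Longrightarrow> vp d y \<Longrightarrow> vp d z \<Longrightarrow>
   comm x (y * z) \<approx> y * c1 + c2 * z"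
  unfolding comm_mult_right by (intro cgr_add cgr_mult cgr_refl)
lemma cgr_Lleft: "comm y z \<approx> c1 \<Longrightarrow> comm x z \<approx> c2 \<Longrightarrow> vp d x \<Longrightarrow> vp d y \<Longrightarrow>
   comm (x * y) z \<approx> x * c1 + c2 * y"
  unfolding comm_mult_left by (intro cgr_add cgr_mult cgr_refl)
lemma cgr_S: "(\<And>i. i \<in> S \<Longrightarrow> comm x (f i) \<approx> g i) \<Longrightarrow> comm x (sum f S) \<approx> sum g S"
  unfolding comm_sum_right by (rule cgr_sum)
lemma cgr_Sleft: "(\<And>i. i \<in> S \<Longrightarrow> comm (f i) x \<approx> g i) \<Longrightarrow> comm (sum f S) x \<approx> sum g S"
  unfolding comm_sum_left by (rule cgr_sum)
lemma cgr_anti: "comm x y \<approx> c \<Longrightarrow> comm y x \<approx> - c"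
  by (subst comm_anti) (rule cgr_neg)

lemma cEE: "i < d \<Longrightarrow> j < d \<Longrightarrow> k < d \<Longrightarrow> l < d \<Longrightarrow>
  comm (ee i j) (ee k l) \<approx> (if j = k then ee i l else 0) - (if l = i then ee k j else 0)"
proof -
  assume a: "i < d" "j < d" "k < d" "l < d"
  have r: "ee i j * ee k l \<approx> ee k l * ee i j + ((if j = k then ee i l else 0) - (if l = i then ee k j else 0))"
    using cgr_rel[of d "E i j" "E k l"] a unfolding ee_def[symmetric] lien_EE by auto
  have "comm (ee i j) (ee k l) \<approx> (ee k l * ee i j + ((if j = k then ee i l else 0) - (if l = i then ee k j else 0))) - ee k l * ee i j"
    unfolding comm_def using a by (intro cgr_diff r cgr_refl) auto
  also have "\<dots> = (if j = k then ee i l else 0) - (if l = i then ee k j else 0)" by simp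
  finally show ?thesis .
qed

lemma cEQ: "i < d \<Longrightarrow> j < d \<Longrightarrow> k < d \<Longrightarrow>
  comm (ee i j) (qq k) \<approx> (if j = k then qq i else 0)"
proof -
  assume a: "i < d" "j < d" "k < d"
  have r: "ee i j * qq k \<approx> qq k * ee i j + (if j = k then qq i else 0)"
    using cgr_rel[of d "E i j" "Q k"] a unfolding ee_def[symmetric] qq_def[symmetric] lien_EQ by auto
  have "comm (ee i j) (qq k) \<approx> (qq k * ee i j + (if j = k then qq i else 0)) - qq k * ee i j"
    unfolding comm_def using a by (intro cgr_diff r cgr_refl) auto
  also have "\<dots> = (if j = k then qq i else 0)" by simp
  finally show ?thesis .
qed

lemma comm0_of_rel: "valid_gen d x \<Longrightarrow> valid_gen d y \<Longrightarrow> lien x y = 0 \<Longrightarrow>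
   comm (monn [x]) (monn [y]) \<approx> 0"
proof -
  assume a: "valid_gen d x" "valid_gen d y" "lien x y = 0"
  have vx: "vp d (monn [x])" "vp d (monn [y])" using a by (auto intro: vp.mon)
  have r: "monn [x] * monn [y] \<approx> monn [y] * monn [x] + 0"
    using cgr_rel[of d x y] a by auto
  have "comm (monn [x]) (monn [y]) \<approx> (monn [y] * monn [x] + 0) - monn [y] * monn [x]"
    unfolding comm_def using vx by (intro cgr_diff r cgr_refl) auto
  then show ?thesis by simp
qed

lemma lien_zero: "lien (P i) (E j k) = 0" "lien (P i) (Q j) = 0" "lien (P i) (P j) = 0"
   "lien (Q i) (Q j) = 0"
  by (transfer, simp add: zero_fun_def)+

lemma cPE: "i < d \<Longrightarrow> j < d \<Longrightarrow> k < d \<Longrightarrow> comm (pp i) (ee j k) \<approx> 0"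
  unfolding pp_def ee_def by (rule comm0_of_rel) (auto simp: lien_zero)
lemma cPQ: "i < d \<Longrightarrow> j < d \<Longrightarrow> comm (pp i) (qq j) \<approx> 0"
  unfolding pp_def qq_def by (rule comm0_of_rel) (auto simp: lien_zero)
lemma cPP: "i < d \<Longrightarrow> j < d \<Longrightarrow> comm (pp i) (pp j) \<approx> 0"
  unfolding pp_def by (rule comm0_of_rel) (auto simp: lien_zero)
lemma cQQ: "i < d \<Longrightarrow> j < d \<Longrightarrow> comm (qq i) (qq j) \<approx> 0"
  unfolding qq_def by (rule comm0_of_rel) (auto simp: lien_zero)


lemma cgr_zero_sum: "(\<And>i. i \<in> S \<Longrightarrow> f i \<approx> 0) \<Longrightarrow> sum f S \<approx> 0"
  using cgr_sum[of S d f "\<lambda>_. 0"] by simp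

lemma M0: "M 0 i j = (if i = j then 1 else 0)" by simp

lemma sum_delta_l: fixes f :: "nat \<Rightarrow> nc"
  shows "k < d \<Longrightarrow> (\<Sum>l<d. (if l = k then x else 0) * f l) = x * f k"
proof -
  assume a: "k < d"
  have "(\<Sum>l<d. (if l = k then x else 0) * f l) = (\<Sum>l<d. if l = k then x * f k else 0)"
    by (rule sum.cong) auto
  then show ?thesis using a by simp
qed
lemma sum_delta_r: fixes f :: "nat \<Rightarrow> nc"
  shows "k < d \<Longrightarrow> (\<Sum>l<d. f l * (if l = k then x else 0)) = f k * x"
proof -
  assume a: "k < d"
  have "(\<Sum>l<d. f l * (if l = k then x else 0)) = (\<Sum>l<d. if l = k then f k * x else 0)"
    by (rule sum.cong) auto
  then show ?thesis using a by simp
qed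
lemma sum_delta_l': fixes f :: "nat \<Rightarrow> nc"
  shows "k < d \<Longrightarrow> (\<Sum>l<d. (if k = l then x else 0) * f l) = x * f k"
  using sum_delta_l[of k x f] by (simp add: eq_commute[of k])
lemma sum_delta_r': fixes f :: "nat \<Rightarrow> nc"
  shows "k < d \<Longrightarrow> (\<Sum>l<d. f l * (if k = l then x else 0)) = f k * x"
  using sum_delta_r[of k f x] by (simp add: eq_commute[of k])

lemma cPM: "k < d \<Longrightarrow> i < d \<Longrightarrow> comm (pp k) (M r i j) \<approx> 0"
proof (induction r arbitrary: i)
  case 0 then show ?case by (simp add: comm_scalar_right)
next
  case (Suc r)
  have "comm (pp k) (M (Suc r) i j) \<approx> (\<Sum>l<d. ee i l * 0 + 0 * M r l j)"
    unfolding MM.simps using Suc by (intro cgr_S cgr_L cPE) auto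
  then show ?case by simp
qed

lemma cPV: "k < d \<Longrightarrow> i < d \<Longrightarrow> comm (pp k) (V m i) \<approx> 0"
proof -
  assume a: "k < d" "i < d"
  have "comm (pp k) (V m i) \<approx> (\<Sum>j<d. M m i j * 0 + 0 * qq j)"
    unfolding VV_def using a by (intro cgr_S cgr_L cPM cPQ) auto
  then show ?thesis by simp
qed

lemma cPA: "k < d \<Longrightarrow> comm (pp k) (Aa r) \<approx> 0"
proof -
  assume a: "k < d"
  have "comm (pp k) (Aa r) \<approx> (\<Sum>i<d. 0)"
    unfolding AA_def using a by (intro cgr_S cPM) auto
  then show ?thesis by simp
qed

lemma cEM: "k < d \<Longrightarrow> l < d \<Longrightarrow> i < d \<Longrightarrow>
  comm (ee k l) (M r i j) \<approx> (if l = i then M r k j else 0) - (if j = k then M r i l else 0)"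
proof (induction r arbitrary: i)
  case 0 then show ?case by (auto simp: comm_scalar_right)
next
  case (Suc r)
  have "comm (ee k l) (M (Suc r) i j) \<approx> (\<Sum>m<d. ee i m * ((if l = m then M r k j else 0) - (if j = k then M r m l else 0))
       + ((if l = i then ee k m else 0) - (if m = k then ee i l else 0)) * M r m j)"
    unfolding MM.simps using Suc by (intro cgr_S cgr_L cEE Suc.IH) auto
  also have "\<dots> = (\<Sum>m<d. ee i m * (if l = m then M r k j else 0)) - (\<Sum>m<d. ee i m * (if j = k then M r m l else 0))
       + (\<Sum>m<d. (if l = i then ee k m else 0) * M r m j) - (\<Sum>m<d. (if m = k then ee i l else 0) * M r m j)"
    by (simp add: algebra_simps sum.distrib sum_subtractf)
  also have "\<dots> = (if l = i then M (Suc r) k j else 0) - (if j = k then M (Suc r) i l else 0)"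
    using Suc.prems by (simp add: sum_delta_r' sum_delta_l)
  finally show ?case .
qed

lemma cEA: "k < d \<Longrightarrow> l < d \<Longrightarrow> comm (ee k l) (Aa r) \<approx> 0"
proof -
  assume a: "k < d" "l < d"
  have "comm (ee k l) (Aa r) \<approx> (\<Sum>i<d. (if l = i then M r k i else 0) - (if i = k then M r i l else 0))"
    unfolding AA_def using a by (intro cgr_S cEM) auto
  also have "\<dots> = 0" using a by (simp add: sum_subtractf sum.delta sum.delta')
  finally show ?thesis .
qed

lemma cMA: "i < d \<Longrightarrow> comm (M s i j) (Aa r) \<approx> 0"
proof (induction s arbitrary: i)
  case 0 then show ?case by (simp add: comm_scalar_left)
next
  case (Suc s)
  have "comm (M (Suc s) i j) (Aa r) \<approx> (\<Sum>l<d. ee i l * 0 + 0 * M s l j)"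
    unfolding MM.simps using Suc by (intro cgr_Sleft cgr_Lleft cEA Suc.IH) auto
  then show ?case by simp
qed

theorem rel1: "comm (Aa r) (Aa s) \<approx> 0"
proof -
  have "comm (Aa r) (Aa s) \<approx> (\<Sum>i<d. - 0)"
    unfolding AA_def[of d s] by (intro cgr_S cgr_anti cMA) auto
  then show ?thesis by simp
qed


lemma M_add: "i < d \<Longrightarrow> (\<Sum>k<d. M s i k * M m k l) = M (s + m) i l"
proof (induction s arbitrary: i)
  case 0 then show ?case by (simp add: sum_delta_l')
next
  case (Suc s)
  have "(\<Sum>k<d. M (Suc s) i k * M m k l) = (\<Sum>k<d. \<Sum>j<d. ee i j * (M s j k * M m k l))"
    by (simp add: sum_distrib_right mult.assoc)
  also have "\<dots> = (\<Sum>j<d. ee i j * (\<Sum>k<d. M s j k * M m k l))"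
    by (subst sum.swap) (simp add: sum_distrib_left)
  also have "\<dots> = M (Suc s + m) i l" using Suc by simp
  finally show ?case .
qed

lemma M_right: "i < d \<Longrightarrow> j < d \<Longrightarrow> M (Suc s) i j = (\<Sum>k<d. M s i k * ee k j)"
proof -
  assume a: "i < d" "j < d"
  have "M (Suc s) i j = (\<Sum>k<d. M s i k * M 1 k j)" using M_add[of i s 1 j] a by simp
  also have "\<dots> = (\<Sum>k<d. M s i k * ee k j)" using a by (simp add: sum_delta_r)
  finally show ?thesis .
qed

lemma V_Suc: "V (Suc m) i = (\<Sum>l<d. ee i l * V m l)"
proof -
  have "V (Suc m) i = (\<Sum>j<d. \<Sum>l<d. ee i l * (M m l j * qq j))"
    unfolding VV_def by (simp add: sum_distrib_right mult.assoc)
  also have "\<dots> = (\<Sum>l<d. \<Sum>j<d. ee i l * (M m l j * qq j))" by (rule sum.swap)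
  also have "\<dots> = (\<Sum>l<d. ee i l * V m l)" unfolding VV_def by (simp add: sum_distrib_left)
  finally show ?thesis .
qed

lemma V_0: "i < d \<Longrightarrow> V 0 i = qq i"
  unfolding VV_def by (simp add: sum_delta_l')

lemma MV: "i < d \<Longrightarrow> (\<Sum>k<d. M s i k * V m k) = V (s + m) i"
proof -
  assume a: "i < d"
  have "(\<Sum>k<d. M s i k * V m k) = (\<Sum>k<d. \<Sum>j<d. M s i k * (M m k j * qq j))"
    unfolding VV_def by (simp add: sum_distrib_left)
  also have "\<dots> = (\<Sum>j<d. \<Sum>k<d. M s i k * (M m k j * qq j))" by (rule sum.swap)
  also have "\<dots> = (\<Sum>j<d. (\<Sum>k<d. M s i k * M m k j) * qq j)"
    by (simp add: sum_distrib_right mult.assoc)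
  also have "\<dots> = V (s + m) i" using a by (simp add: M_add VV_def)
  finally show ?thesis .
qed

lemma cW: "i < d \<Longrightarrow> k < d \<Longrightarrow> comm (M r i j) (qq k) \<approx> (\<Sum>t<r. V t i * M (r - 1 - t) k j)"
proof (induction r arbitrary: i)
  case 0 then show ?case by (simp add: comm_scalar_left)
next
  case (Suc r)
  have "comm (M (Suc r) i j) (qq k) \<approx> (\<Sum>l<d. ee i l * (\<Sum>t<r. V t l * M (r - 1 - t) k j) + (if l = k then qq i else 0) * M r l j)"
    unfolding MM.simps using Suc by (intro cgr_Sleft cgr_Lleft cEQ Suc.IH) auto
  also have "\<dots> = (\<Sum>l<d. \<Sum>t<r. ee i l * (V t l * M (r - 1 - t) k j)) + qq i * M r k j"
    using Suc.prems by (simp add: sum.distrib sum_delta_l sum_distrib_left)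
  also have "\<dots> = (\<Sum>t<r. \<Sum>l<d. ee i l * (V t l * M (r - 1 - t) k j)) + qq i * M r k j"
    by (subst sum.swap) (rule refl)
  also have "\<dots> = (\<Sum>t<r. (\<Sum>l<d. ee i l * V t l) * M (r - 1 - t) k j) + qq i * M r k j"
    by (simp add: sum_distrib_right mult.assoc)
  also have "\<dots> = (\<Sum>t<Suc r. V t i * M (Suc r - 1 - t) k j)"
    using Suc.prems by (subst sum.lessThan_Suc_shift) (simp add: V_Suc V_0 add.commute del: sum.lessThan_Suc)
  finally show ?case .
qed

lemma cEV: "k < d \<Longrightarrow> j < d \<Longrightarrow> i < d \<Longrightarrow> comm (ee k j) (V t i) \<approx> (if j = i then V t k else 0)"
proof -
  assume a: "k < d" "j < d" "i < d"
  have "comm (ee k j) (V t i) \<approx> (\<Sum>l<d. M t i l * (if j = l then qq k else 0) + ((if j = i then M t k l else 0) - (if l = k then M t i j else 0)) * qq l)"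
    unfolding VV_def using a by (intro cgr_S cgr_L cEQ cEM) auto
  also have "\<dots> = M t i j * qq k + (\<Sum>l<d. (if j = i then M t k l else 0) * qq l) - (\<Sum>l<d. (if l = k then M t i j else 0) * qq l)"
    using a by (simp add: sum.distrib sum_subtractf algebra_simps sum_delta_r')
  also have "\<dots> = (if j = i then V t k else 0)"
    using a by (simp add: sum_delta_l VV_def)
  finally show ?thesis .
qed

lemma cVQ: "k < d \<Longrightarrow> l < d \<Longrightarrow> comm (V s k) (qq l) \<approx> (\<Sum>t<s. V t k * V (s - 1 - t) l)"
proof -
  assume a: "k < d" "l < d"
  have "comm (V s k) (qq l) \<approx> (\<Sum>j<d. M s k j * 0 + (\<Sum>t<s. V t k * M (s - 1 - t) l j) * qq j)"
    unfolding VV_def[of d s k] using a by (intro cgr_Sleft cgr_Lleft cQQ cW) auto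
  also have "\<dots> = (\<Sum>j<d. \<Sum>t<s. V t k * (M (s - 1 - t) l j * qq j))"
    by (simp add: sum_distrib_right mult.assoc)
  also have "\<dots> = (\<Sum>t<s. \<Sum>j<d. V t k * (M (s - 1 - t) l j * qq j))"
    by (rule sum.swap)
  also have "\<dots> = (\<Sum>t<s. V t k * V (s - 1 - t) l)"
    by (simp add: VV_def sum_distrib_left)
  finally show ?thesis .
qed


lemma cYA: "k < d \<Longrightarrow> comm (Aa r) (qq k) \<approx> (\<Sum>t<r. \<Sum>i<d. V t i * M (r - 1 - t) k i)"
proof -
  assume a: "k < d"
  have "comm (Aa r) (qq k) \<approx> (\<Sum>i<d. \<Sum>t<r. V t i * M (r - 1 - t) k i)"
    unfolding AA_def using a by (intro cgr_Sleft cW) auto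
  also have "\<dots> = (\<Sum>t<r. \<Sum>i<d. V t i * M (r - 1 - t) k i)" by (rule sum.swap)
  finally show ?thesis .
qed

lemma reidx: "(\<Sum>t<r. V t k * Aa (r - 1 - t)) = (\<Sum>t<r. V (r - 1 - t) k * Aa t)"
proof -
  have "(\<Sum>t<r. V (r - 1 - t) k * Aa t) = (\<Sum>i<r. (\<lambda>t. V (r - 1 - t) k * Aa t) (r - Suc i))"
    by (rule sum.nat_diff_reindex[symmetric])
  also have "\<dots> = (\<Sum>t<r. V t k * Aa (r - 1 - t))"
    by (rule sum.cong) auto
  finally show ?thesis by simp
qed

lemma ee_V_swap: "k < d \<Longrightarrow> j < d \<Longrightarrow> i < d \<Longrightarrow> ee k j * V t i \<approx> V t i * ee k j + (if j = i then V t k else 0)"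
proof -
  assume a: "k < d" "j < d" "i < d"
  have "ee k j * V t i = V t i * ee k j + comm (ee k j) (V t i)" by (simp add: comm_def)
  also have "\<dots> \<approx> V t i * ee k j + (if j = i then V t k else 0)"
    using a by (intro cgr_add cgr_refl cEV) auto
  finally show ?thesis .
qed

lemma star: "k < d \<Longrightarrow> comm (Aa (Suc r)) (qq k) - (\<Sum>j<d. ee k j * comm (Aa r) (qq j))
   \<approx> V r k - (\<Sum>t<r. V (r - 1 - t) k * Aa t)"
proof -
  assume a: "k < d"
  define S1 where "S1 t = (\<Sum>i<d. V t i * M (r - t) k i)" for t
  have T1: "comm (Aa (Suc r)) (qq k) \<approx> (\<Sum>t<Suc r. S1 t)"
    using cYA[OF a, of "Suc r"] by (simp add: S1_def)
  have "(\<Sum>j<d. ee k j * comm (Aa r) (qq j)) \<approx> (\<Sum>j<d. ee k j * (\<Sum>t<r. \<Sum>i<d. V t i * M (r - 1 - t) j i))"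
    using a by (intro cgr_sum cgr_mult cgr_refl cYA) auto
  also have "\<dots> = (\<Sum>t<r. \<Sum>i<d. \<Sum>j<d. (ee k j * V t i) * M (r - 1 - t) j i)"
  proof -
    have "(\<Sum>j<d. ee k j * (\<Sum>t<r. \<Sum>i<d. V t i * M (r - 1 - t) j i))
        = (\<Sum>j<d. \<Sum>t<r. \<Sum>i<d. (ee k j * V t i) * M (r - 1 - t) j i)"
      by (simp add: sum_distrib_left mult.assoc)
    also have "\<dots> = (\<Sum>t<r. \<Sum>j<d. \<Sum>i<d. (ee k j * V t i) * M (r - 1 - t) j i)"
      by (rule sum.swap)
    also have "\<dots> = (\<Sum>t<r. \<Sum>i<d. \<Sum>j<d. (ee k j * V t i) * M (r - 1 - t) j i)"
      by (rule sum.cong[OF refl], rule sum.swap)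
    finally show ?thesis .
  qed
  also have "\<dots> \<approx> (\<Sum>t<r. \<Sum>i<d. \<Sum>j<d. (V t i * ee k j + (if j = i then V t k else 0)) * M (r - 1 - t) j i)"
    using a by (intro cgr_sum cgr_mult ee_V_swap cgr_refl) auto
  also have "\<dots> = (\<Sum>t<r. S1 t + V t k * Aa (r - 1 - t))"
  proof (rule sum.cong[OF refl])
    fix t assume t: "t \<in> {..<r}"
    have "(\<Sum>i<d. \<Sum>j<d. (V t i * ee k j + (if j = i then V t k else 0)) * M (r - 1 - t) j i)
      = (\<Sum>i<d. V t i * (\<Sum>j<d. ee k j * M (r - 1 - t) j i)) + (\<Sum>i<d. \<Sum>j<d. (if j = i then V t k else 0) * M (r - 1 - t) j i)"
      by (simp add: algebra_simps sum.distrib sum_distrib_left)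
    also have "\<dots> = S1 t + V t k * Aa (r - 1 - t)"
    proof -
      have "Suc (r - 1 - t) = r - t" using t by auto
      then have 1: "(\<Sum>i<d. V t i * (\<Sum>j<d. ee k j * M (r - 1 - t) j i)) = S1 t"
        unfolding S1_def by (metis MM.simps(2))
      have 2: "(\<Sum>i<d. \<Sum>j<d. (if j = i then V t k else 0) * M (r - 1 - t) j i) = V t k * Aa (r - 1 - t)"
        unfolding AA_def by (simp add: sum_delta_l sum_distrib_left)
      show ?thesis using 1 2 by simp
    qed
    finally show "(\<Sum>i<d. \<Sum>j<d. (V t i * ee k j + (if j = i then V t k else 0)) * M (r - 1 - t) j i) = S1 t + V t k * Aa (r - 1 - t)" .
  qed
  finally have T2: "(\<Sum>j<d. ee k j * comm (Aa r) (qq j)) \<approx> (\<Sum>t<r. S1 t + V t k * Aa (r - 1 - t))" .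
  have "comm (Aa (Suc r)) (qq k) - (\<Sum>j<d. ee k j * comm (Aa r) (qq j)) \<approx> (\<Sum>t<Suc r. S1 t) - (\<Sum>t<r. S1 t + V t k * Aa (r - 1 - t))"
    by (intro cgr_diff T1 T2)
  also have "\<dots> = S1 r - (\<Sum>t<r. V t k * Aa (r - 1 - t))"
    by (simp add: sum.distrib)
  also have "\<dots> = V r k - (\<Sum>t<r. V (r - 1 - t) k * Aa t)"
    using a reidx[of k] by (simp add: S1_def sum_delta_r')
  finally show ?thesis .
qed


lemma cAV: "i < d \<Longrightarrow> comm (Aa r) (V s i) \<approx> (\<Sum>j<d. M s i j * comm (Aa r) (qq j))"
proof -
  assume a: "i < d"
  have "comm (Aa r) (V s i) \<approx> (\<Sum>j<d. M s i j * comm (Aa r) (qq j) + (- 0) * qq j)"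
    unfolding VV_def using a by (intro cgr_S cgr_L cgr_refl cgr_anti cMA) auto
  then show ?thesis by simp
qed

lemma cAB: "comm (Aa r) (Bb s) \<approx> (\<Sum>i<d. pp i * (\<Sum>j<d. M s i j * comm (Aa r) (qq j)))"
proof -
  have "comm (Aa r) (Bb s) \<approx> (\<Sum>i<d. pp i * (\<Sum>j<d. M s i j * comm (Aa r) (qq j)) + (- 0) * V s i)"
    unfolding BB_def by (intro cgr_S cgr_L cAV cgr_anti cPA) auto
  then show ?thesis by simp
qed

theorem rel3: "comm (Aa (Suc r)) (Bb s) - comm (Aa r) (Bb (Suc s))
   \<approx> Bb (r + s) - (\<Sum>t<r. Bb (r + s - t - 1) * Aa t)"
proof -
  define Y where "Y r j = comm (Aa r) (qq j)" for r j
  have "comm (Aa (Suc r)) (Bb s) - comm (Aa r) (Bb (Suc s))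
     \<approx> (\<Sum>i<d. pp i * (\<Sum>j<d. M s i j * Y (Suc r) j)) - (\<Sum>i<d. pp i * (\<Sum>j<d. M (Suc s) i j * Y r j))"
    unfolding Y_def by (intro cgr_diff cAB)
  also have "\<dots> = (\<Sum>i<d. pp i * (\<Sum>k<d. M s i k * (Y (Suc r) k - (\<Sum>j<d. ee k j * Y r j))))"
  proof -
    have "\<And>i. i < d \<Longrightarrow> (\<Sum>j<d. M (Suc s) i j * Y r j) = (\<Sum>k<d. M s i k * (\<Sum>j<d. ee k j * Y r j))"
    proof -
      fix i assume i: "i < d"
      have "(\<Sum>j<d. M (Suc s) i j * Y r j) = (\<Sum>j<d. \<Sum>k<d. M s i k * (ee k j * Y r j))"
      proof (rule sum.cong[OF refl])
        fix j assume "j \<in> {..<d}"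
        then have e: "M (Suc s) i j = (\<Sum>k<d. M s i k * ee k j)" using M_right i by auto
        show "M (Suc s) i j * Y r j = (\<Sum>k<d. M s i k * (ee k j * Y r j))"
          by (simp only: e sum_distrib_right mult.assoc)
      qed
      also have "\<dots> = (\<Sum>k<d. \<Sum>j<d. M s i k * (ee k j * Y r j))" by (rule sum.swap)
      also have "\<dots> = (\<Sum>k<d. M s i k * (\<Sum>j<d. ee k j * Y r j))" by (simp add: sum_distrib_left)
      finally show "(\<Sum>j<d. M (Suc s) i j * Y r j) = (\<Sum>k<d. M s i k * (\<Sum>j<d. ee k j * Y r j))" .
    qed
    then have "(\<Sum>i<d. pp i * (\<Sum>j<d. M (Suc s) i j * Y r j)) = (\<Sum>i<d. pp i * (\<Sum>k<d. M s i k * (\<Sum>j<d. ee k j * Y r j)))"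
      by (intro sum.cong refl) simp
    then show ?thesis by (simp add: algebra_simps sum_subtractf)
  qed
  also have "\<dots> \<approx> (\<Sum>i<d. pp i * (\<Sum>k<d. M s i k * (V r k - (\<Sum>t<r. V (r - 1 - t) k * Aa t))))"
    unfolding Y_def by (intro cgr_sum cgr_mult cgr_refl star) auto
  also have "\<dots> = (\<Sum>i<d. pp i * V (s + r) i) - (\<Sum>t<r. (\<Sum>i<d. pp i * V (s + (r - 1 - t)) i) * Aa t)"
  proof -
    have "\<And>i. i < d \<Longrightarrow> (\<Sum>k<d. M s i k * (V r k - (\<Sum>t<r. V (r - 1 - t) k * Aa t)))
        = V (s + r) i - (\<Sum>t<r. V (s + (r - 1 - t)) i * Aa t)"
    proof -
      fix i assume i: "i < d"
      have "(\<Sum>k<d. M s i k * (\<Sum>t<r. V (r - 1 - t) k * Aa t)) = (\<Sum>k<d. \<Sum>t<r. M s i k * V (r - 1 - t) k * Aa t)"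
        by (simp add: sum_distrib_left mult.assoc)
      also have "\<dots> = (\<Sum>t<r. \<Sum>k<d. M s i k * V (r - 1 - t) k * Aa t)" by (rule sum.swap)
      also have "\<dots> = (\<Sum>t<r. V (s + (r - 1 - t)) i * Aa t)"
        using i by (simp add: sum_distrib_right[symmetric] MV)
      finally show "(\<Sum>k<d. M s i k * (V r k - (\<Sum>t<r. V (r - 1 - t) k * Aa t)))
        = V (s + r) i - (\<Sum>t<r. V (s + (r - 1 - t)) i * Aa t)"
        using i by (simp add: right_diff_distrib sum_subtractf MV)
    qed
    then have "(\<Sum>i<d. pp i * (\<Sum>k<d. M s i k * (V r k - (\<Sum>t<r. V (r - 1 - t) k * Aa t))))
       = (\<Sum>i<d. pp i * V (s + r) i - (\<Sum>t<r. pp i * V (s + (r - 1 - t)) i * Aa t))"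
      by (intro sum.cong refl) (simp add: right_diff_distrib sum_distrib_left mult.assoc)
    also have "\<dots> = (\<Sum>i<d. pp i * V (s + r) i) - (\<Sum>i<d. \<Sum>t<r. pp i * V (s + (r - 1 - t)) i * Aa t)"
      by (simp add: sum_subtractf)
    also have "(\<Sum>i<d. \<Sum>t<r. pp i * V (s + (r - 1 - t)) i * Aa t) = (\<Sum>t<r. \<Sum>i<d. pp i * V (s + (r - 1 - t)) i * Aa t)"
      by (rule sum.swap)
    finally show ?thesis by (simp add: sum_distrib_right)
  qed
  also have "\<dots> = Bb (r + s) - (\<Sum>t<r. Bb (r + s - t - 1) * Aa t)"
  proof -
    have "(\<Sum>t<r. (\<Sum>i<d. pp i * V (s + (r - 1 - t)) i) * Aa t) = (\<Sum>t<r. Bb (r + s - t - 1) * Aa t)"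
    proof (rule sum.cong[OF refl])
      fix t assume "t \<in> {..<r}"
      then have "s + (r - 1 - t) = r + s - t - 1" by auto
      then show "(\<Sum>i<d. pp i * V (s + (r - 1 - t)) i) * Aa t = Bb (r + s - t - 1) * Aa t"
        by (simp add: BB_def)
    qed
    then show ?thesis by (simp add: BB_def add.commute)
  qed
  finally show ?thesis .
qed


lemma cgr_diff0: "x - y \<approx> 0 \<Longrightarrow> vp d x \<Longrightarrow> vp d y \<Longrightarrow> x \<approx> y"
  unfolding cgr_def by simp

lemma E1: "i < d \<Longrightarrow> k < d \<Longrightarrow>
  comm (V (Suc m) i) (V n k) \<approx> (\<Sum>j<d. ee i j * comm (V m j) (V n k)) + V n i * V m k"
proof -
  assume a: "i < d" "k < d"
  have "comm (V (Suc m) i) (V n k) \<approx> (\<Sum>j<d. ee i j * comm (V m j) (V n k) + (if j = k then V n i else 0) * V m j)"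
    unfolding V_Suc using a by (intro cgr_Sleft cgr_Lleft cgr_refl cEV) auto
  also have "\<dots> = (\<Sum>j<d. ee i j * comm (V m j) (V n k)) + V n i * V m k"
    using a by (simp add: sum.distrib sum_delta_l)
  finally show ?thesis .
qed

lemma E2: "k < d \<Longrightarrow> l < d \<Longrightarrow>
  comm (V r k) (V (Suc s) l) \<approx> (\<Sum>j<d. ee l j * comm (V r k) (V s j)) - V r l * V s k"
proof -
  assume a: "k < d" "l < d"
  have "comm (V r k) (V (Suc s) l) \<approx> (\<Sum>j<d. ee l j * comm (V r k) (V s j) + (- (if j = k then V r l else 0)) * V s j)"
    unfolding V_Suc[of s l] using a by (intro cgr_S cgr_L cgr_refl cgr_anti cEV) auto
  also have "\<dots> = (\<Sum>j<d. ee l j * comm (V r k) (V s j)) - V r l * V s k"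
    using a by (simp add: sum_subtractf sum_delta_l)
  finally show ?thesis .
qed

lemma DI:
  assumes hS: "\<And>l k. l < d \<Longrightarrow> k < d \<Longrightarrow> comm (V r l) (V s k) \<approx> comm (V r k) (V s l)"
    and a: "l < d" "k < d"
  shows "comm (V (Suc r) l) (V s k) \<approx> comm (V r k) (V (Suc s) l) + V r l * V s k + V s l * V r k"
proof -
  have "comm (V (Suc r) l) (V s k) \<approx> (\<Sum>j<d. ee l j * comm (V r j) (V s k)) + V s l * V r k"
    using a by (rule E1)
  also have "\<dots> \<approx> (\<Sum>j<d. ee l j * comm (V r k) (V s j)) + V s l * V r k"
    using a by (intro cgr_add cgr_sum cgr_mult cgr_refl hS) auto
  also have "\<dots> = ((\<Sum>j<d. ee l j * comm (V r k) (V s j)) - V r l * V s k) + V r l * V s k + V s l * V r k"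
    by simp
  also have "\<dots> \<approx> comm (V r k) (V (Suc s) l) + V r l * V s k + V s l * V r k"
    using a by (intro cgr_add cgr_refl cgr_sym[OF E2]) auto
  finally show ?thesis .
qed

lemma reidx2: fixes g :: "nat \<Rightarrow> nat \<Rightarrow> nc"
  shows "(\<Sum>t<n. g t (n - 1 - t)) = (\<Sum>t<n. g (n - 1 - t) t)"
proof -
  have "(\<Sum>t<n. g (n - 1 - t) t) = (\<Sum>i<n. (\<lambda>t. g (n - 1 - t) t) (n - Suc i))"
    by (rule sum.nat_diff_reindex[symmetric])
  also have "\<dots> = (\<Sum>t<n. g t (n - 1 - t))"
    by (rule sum.cong) auto
  finally show ?thesis by simp
qed

lemma symD: "\<forall>r s l k. r + s = n \<longrightarrow> l < d \<longrightarrow> k < d \<longrightarrow> comm (V r l) (V s k) \<approx> comm (V r k) (V s l)"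
proof (induction n rule: less_induct)
  case (less n)
  have IH: "\<And>r s l k. r + s < n \<Longrightarrow> l < d \<Longrightarrow> k < d \<Longrightarrow> comm (V r l) (V s k) \<approx> comm (V r k) (V s l)"
    using less by blast
  have base: "comm (V 0 l) (V n k) \<approx> comm (V 0 k) (V n l)" if lk: "l < d" "k < d" for l k
  proof -
    define S1 where "S1 = (\<Sum>t<n. V t k * V (n - 1 - t) l)"
    define S2 where "S2 = (\<Sum>t<n. V t l * V (n - 1 - t) k)"
    define X where "X = S1 - S2"
    have vX: "vp d X" unfolding X_def S1_def S2_def using lk by auto
    have S2r: "S2 = (\<Sum>t<n. V (n - 1 - t) l * V t k)"
      unfolding S2_def by (rule reidx2[of "\<lambda>a b. V a l * V b k"])
    have S1r: "S1 = (\<Sum>t<n. V (n - 1 - t) k * V t l)"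
      unfolding S1_def by (rule reidx2[of "\<lambda>a b. V a k * V b l"])
    have "X = (\<Sum>t<n. comm (V t k) (V (n - 1 - t) l))"
      unfolding X_def S1_def S2r comm_def by (simp add: sum_subtractf)
    also have "\<dots> \<approx> (\<Sum>t<n. comm (V t l) (V (n - 1 - t) k))"
      using lk by (intro cgr_sum IH) auto
    also have "\<dots> = - X"
      unfolding X_def S2_def S1r comm_def by (simp add: sum_subtractf)
    finally have XX: "X \<approx> - X" .
    have "X + X \<approx> - X + X" using vX by (intro cgr_add XX cgr_refl)
    then have "X + X \<approx> 0" by simp
    then have X0: "X \<approx> 0" using vX by (rule cgr_half)
    have "comm (V 0 l) (V n k) = - comm (V n k) (qq l)" using lk by (simp add: V_0 comm_anti[of "qq l"])
    also have "\<dots> \<approx> - S1" unfolding S1_def using lk by (intro cgr_neg cVQ)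
    also have "- S1 = - (S2 + X)" by (simp add: X_def)
    also have "\<dots> \<approx> - (S2 + 0)" unfolding S2_def using lk X0 by (intro cgr_neg cgr_add cgr_refl) auto
    also have "\<dots> = - S2" by simp
    also have "\<dots> \<approx> - comm (V n l) (qq k)" unfolding S2_def using lk by (intro cgr_neg cgr_sym[OF cVQ])
    also have "\<dots> = comm (V 0 k) (V n l)" using lk by (simp add: V_0 comm_anti[of "qq k"])
    finally show ?thesis .
  qed
  have "\<forall>s l k. r + s = n \<longrightarrow> l < d \<longrightarrow> k < d \<longrightarrow> comm (V r l) (V s k) \<approx> comm (V r k) (V s l)" for r
  proof (induction r)
    case 0 then show ?case using base by auto
  next
    case (Suc r)
    show ?case
    proof (intro allI impI)
      fix s l k assume h: "Suc r + s = n" "l < d" "k < d"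
      have hS: "\<And>l k. l < d \<Longrightarrow> k < d \<Longrightarrow> comm (V r l) (V s k) \<approx> comm (V r k) (V s l)"
        using h by (intro IH) auto
      have inner: "\<And>l k. l < d \<Longrightarrow> k < d \<Longrightarrow> comm (V r l) (V (Suc s) k) \<approx> comm (V r k) (V (Suc s) l)"
        using Suc h by auto
      have "comm (V (Suc r) l) (V s k) \<approx> comm (V r k) (V (Suc s) l) + V r l * V s k + V s l * V r k"
        using h by (intro DI hS)
      also have "\<dots> \<approx> comm (V r l) (V (Suc s) k) + V r l * V s k + V s l * V r k"
        using h by (intro cgr_add cgr_refl inner) auto
      also have "\<dots> = comm (V r l) (V (Suc s) k) + V r k * V s l + V s k * V r l
          + (comm (V r l) (V s k) - comm (V r k) (V s l))"
        by (simp add: comm_def algebra_simps)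
      also have "\<dots> \<approx> comm (V r l) (V (Suc s) k) + V r k * V s l + V s k * V r l
          + (comm (V r k) (V s l) - comm (V r k) (V s l))"
        using h by (intro cgr_add cgr_diff cgr_refl hS) auto
      also have "\<dots> = comm (V r l) (V (Suc s) k) + V r k * V s l + V s k * V r l" by simp
      also have "\<dots> \<approx> comm (V (Suc r) k) (V s l)"
        using h by (intro cgr_sym[OF DI] hS) auto
      finally show "comm (V (Suc r) l) (V s k) \<approx> comm (V (Suc r) k) (V s l)" .
    qed
  qed
  then show ?case by blast
qed

lemma symD': "l < d \<Longrightarrow> k < d \<Longrightarrow> comm (V r l) (V s k) \<approx> comm (V r k) (V s l)"
  using symD[of "r + s"] by blast


definition G :: "nat \<Rightarrow> nat \<Rightarrow> nc" where
  "G x y = (\<Sum>i<d. \<Sum>k<d. pp i * pp k * (V x i * V y k))"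
definition G' :: "nat \<Rightarrow> nat \<Rightarrow> nc" where
  "G' x y = (\<Sum>i<d. \<Sum>k<d. pp i * pp k * (V y k * V x i))"

lemma vpG[simp,intro]: "vp d (G x y)" by (auto simp add: G_def intro!: vp_sum' vp_times)
lemma vpG'[simp,intro]: "vp d (G' x y)" by (auto simp add: G'_def intro!: vp_sum' vp_times)

lemma BBG: "Bb x * Bb y \<approx> G x y"
proof -
  have "Bb x * Bb y = (\<Sum>i<d. \<Sum>k<d. pp i * (V x i * pp k) * V y k)"
    unfolding BB_def by (simp only: sum_product mult.assoc)
  also have "\<dots> \<approx> (\<Sum>i<d. \<Sum>k<d. pp i * (pp k * V x i - 0) * V y k)"
  proof (intro cgr_sum cgr_mult cgr_refl)
    fix i k assume "i \<in> {..<d}" "k \<in> {..<d}"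
    then have a: "i < d" "k < d" by auto
    have "V x i * pp k = pp k * V x i - comm (pp k) (V x i)" by (simp add: comm_def)
    also have "\<dots> \<approx> pp k * V x i - 0" using a by (intro cgr_diff cgr_refl cPV) auto
    finally show "V x i * pp k \<approx> pp k * V x i - 0" .
  qed auto
  also have "\<dots> = G x y" unfolding G_def by (simp add: mult.assoc)
  finally show ?thesis .
qed

lemma GS: "G y x \<approx> G' x y"
proof -
  have "G y x = (\<Sum>k<d. \<Sum>i<d. pp i * pp k * (V y i * V x k))" unfolding G_def by (rule sum.swap)
  also have "\<dots> \<approx> (\<Sum>k<d. \<Sum>i<d. (pp k * pp i - 0) * (V y i * V x k))"
  proof (intro cgr_sum cgr_mult cgr_refl)
    fix i k assume "i \<in> {..<d}" "k \<in> {..<d}"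
    then have a: "i < d" "k < d" by auto
    have "pp i * pp k = pp k * pp i + comm (pp i) (pp k)" by (simp add: comm_def)
    also have "\<dots> \<approx> pp k * pp i + 0" using a by (intro cgr_add cgr_refl cPP) auto
    finally show "pp i * pp k \<approx> pp k * pp i - 0" by simp
  qed auto
  also have "\<dots> = G' x y" unfolding G'_def by simp
  finally show ?thesis .
qed

lemma BcommH: "comm (Bb a) (Bb b) \<approx> (\<Sum>i<d. \<Sum>k<d. pp i * pp k * comm (V a i) (V b k))"
proof -
  have "comm (Bb a) (Bb b) \<approx> G a b - G' a b"
    unfolding comm_def by (intro cgr_diff BBG cgr_trans[OF BBG GS])
  also have "\<dots> = (\<Sum>i<d. \<Sum>k<d. pp i * pp k * comm (V a i) (V b k))"
    unfolding G_def G'_def comm_def by (simp add: sum_subtractf right_diff_distrib)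
  finally show ?thesis .
qed

theorem rel4: "comm (Bb (Suc r)) (Bb s) - comm (Bb r) (Bb (Suc s)) \<approx> Bb r * Bb s + Bb s * Bb r"
proof (rule cgr_diff0)
  have "comm (Bb (Suc r)) (Bb s) - comm (Bb r) (Bb (Suc s)) - (Bb r * Bb s + Bb s * Bb r)
     \<approx> (\<Sum>i<d. \<Sum>k<d. pp i * pp k * comm (V (Suc r) i) (V s k)) - (\<Sum>i<d. \<Sum>k<d. pp i * pp k * comm (V r i) (V (Suc s) k))
        - (G r s + G' r s)"
    by (intro cgr_diff cgr_add BcommH BBG cgr_trans[OF BBG GS])
  also have "\<dots> = (\<Sum>i<d. \<Sum>k<d. pp i * pp k * (comm (V (Suc r) i) (V s k) - comm (V r i) (V (Suc s) k)
        - (V r i * V s k + V s k * V r i)))"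
    unfolding G_def G'_def by (simp add: sum_subtractf sum.distrib algebra_simps)
  also have "\<dots> \<approx> (\<Sum>i<d. \<Sum>k<d. pp i * pp k * (V s i * V r k - V s k * V r i))"
  proof (intro cgr_sum cgr_mult cgr_refl)
    fix i k assume "i \<in> {..<d}" "k \<in> {..<d}"
    then have a: "i < d" "k < d" by auto
    have "comm (V (Suc r) i) (V s k) - comm (V r i) (V (Suc s) k) - (V r i * V s k + V s k * V r i)
       \<approx> (comm (V r k) (V (Suc s) i) + V r i * V s k + V s i * V r k) - comm (V r i) (V (Suc s) k) - (V r i * V s k + V s k * V r i)"
      using a by (intro cgr_diff cgr_refl DI symD') auto
    also have "\<dots> \<approx> (comm (V r i) (V (Suc s) k) + V r i * V s k + V s i * V r k) - comm (V r i) (V (Suc s) k) - (V r i * V s k + V s k * V r i)"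
      using a by (intro cgr_diff cgr_add cgr_refl symD') auto
    also have "\<dots> = V s i * V r k - V s k * V r i" by simp
    finally show "comm (V (Suc r) i) (V s k) - comm (V r i) (V (Suc s) k) - (V r i * V s k + V s k * V r i)
       \<approx> V s i * V r k - V s k * V r i" .
  qed auto
  also have "\<dots> = G s r - G' r s"
    unfolding G_def G'_def by (simp add: sum_subtractf right_diff_distrib)
  also have "\<dots> \<approx> G' r s - G' r s" by (intro cgr_diff GS cgr_refl) auto
  also have "\<dots> = 0" by simp
  finally show "comm (Bb (Suc r)) (Bb s) - comm (Bb r) (Bb (Suc s)) - (Bb r * Bb s + Bb s * Bb r) \<approx> 0" .
qed auto

end



fun pathw :: "nat list \<Rightarrow> gen list" where
  "pathw (x # y # t) = E x y # pathw (y # t)"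
| "pathw _ = []"

lemma pathw_map: "pathw L = map (\<lambda>k. E (L ! k) (L ! (k + 1))) [0..<length L - 1]"
proof (induction L rule: pathw.induct)
  case (1 x y t)
  have "[0..<length (x # y # t) - 1] = 0 # map Suc [0..<length (y # t) - 1]"
    by (simp only: length_Cons diff_Suc_1 upt_conv_Cons[OF zero_less_Suc] map_Suc_upt[symmetric])
  then show ?case using 1 by (simp add: comp_def)
qed auto

definition PS :: "nat \<Rightarrow> nat \<Rightarrow> nat \<Rightarrow> nat \<Rightarrow> nat list set" where
  "PS d r i j = {L \<in> idx d (Suc r). L ! 0 = i \<and> L ! r = j}"

lemma finite_idx: "finite (idx d n)"
proof -
  have "idx d n = {xs. set xs \<subseteq> {..<d} \<and> length xs = n}" unfolding idx_def by auto
  then show ?thesis using finite_lists_length_eq[of "{..<d}" n] by simp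
qed

lemma finite_PS: "finite (PS d r i j)"
  unfolding PS_def using finite_idx by simp

lemma PS_0: "i < d \<Longrightarrow> PS d 0 i j = (if i = j then {[i]} else {})"
  unfolding PS_def idx_def by (auto simp: length_Suc_conv)

lemma PS_Suc: assumes "i < d" shows "PS d (Suc r) i j = (\<lambda>L. i # L) ` (\<Union>l\<in>{..<d}. PS d r l j)"
proof (intro equalityI subsetI)
  fix L assume L: "L \<in> PS d (Suc r) i j"
  then obtain a L' where LL: "L = a # L'" unfolding PS_def idx_def by (cases L) auto
  have "a = i" using L LL unfolding PS_def by auto
  moreover have "L' \<in> PS d r (L' ! 0) j" using L LL unfolding PS_def idx_def by auto
  moreover have "L' ! 0 < d" using L LL unfolding PS_def idx_def by (cases L') auto
  ultimately show "L \<in> (\<lambda>L. i # L) ` (\<Union>l\<in>{..<d}. PS d r l j)" using LL by blast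
next
  fix L assume "L \<in> (\<lambda>L. i # L) ` (\<Union>l\<in>{..<d}. PS d r l j)"
  then obtain L' l where "L = i # L'" "l < d" "L' \<in> PS d r l j" by auto
  then show "L \<in> PS d (Suc r) i j" using \<open>i < d\<close> unfolding PS_def idx_def by auto
qed

lemma monn_pathw_Cons: "L \<noteq> [] \<Longrightarrow> monn (pathw (i # L)) = ee i (L ! 0) * monn (pathw L)"
proof (cases L)
  case (Cons a t)
  have "monn (E i a # pathw (a # t)) = monn [E i a] * monn (pathw (a # t))"
    using monn_append[of "[E i a]" "pathw (a # t)"] by simp
  then show ?thesis using Cons by (simp add: ee_def)
qed simp

lemma MM_closed: "i < d \<Longrightarrow> j < d \<Longrightarrow> MM d r i j = (\<Sum>L\<in>PS d r i j. monn (pathw L))"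
proof (induction r arbitrary: i)
  case 0 then show ?case by (simp add: PS_0 monn_Nil)
next
  case (Suc r)
  have disj: "\<forall>l1\<in>{..<d}. \<forall>l2\<in>{..<d}. l1 \<noteq> l2 \<longrightarrow> PS d r l1 j \<inter> PS d r l2 j = {}"
    unfolding PS_def by auto
  have "(\<Sum>L\<in>PS d (Suc r) i j. monn (pathw L)) = (\<Sum>L\<in>(\<Union>l\<in>{..<d}. PS d r l j). monn (pathw (i # L)))"
    unfolding PS_Suc[OF Suc.prems(1)] by (subst sum.reindex) (auto simp: inj_on_def)
  also have "\<dots> = (\<Sum>l<d. \<Sum>L\<in>PS d r l j. monn (pathw (i # L)))"
    by (rule sum.UNION_disjoint) (auto simp: finite_PS disj)
  also have "\<dots> = (\<Sum>l<d. ee i l * (\<Sum>L\<in>PS d r l j. monn (pathw L)))"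
  proof (rule sum.cong[OF refl])
    fix l assume "l \<in> {..<d}"
    have "\<And>L. L \<in> PS d r l j \<Longrightarrow> monn (pathw (i # L)) = ee i l * monn (pathw L)"
    proof -
      fix L assume "L \<in> PS d r l j"
      then have "L \<noteq> []" "L ! 0 = l" unfolding PS_def idx_def by auto
      then show "monn (pathw (i # L)) = ee i l * monn (pathw L)" using monn_pathw_Cons by auto
    qed
    then show "(\<Sum>L\<in>PS d r l j. monn (pathw (i # L))) = ee i l * (\<Sum>L\<in>PS d r l j. monn (pathw L))"
      by (simp add: sum_distrib_left)
  qed
  also have "\<dots> = MM d (Suc r) i j" using Suc by simp
  finally show ?case by simp
qed




lemma Rep_of_nat: "Rep_nc (of_nat n) = tscale (of_nat n) (mon [])"
proof (induction n)
  case 0 then show ?case by (simp add: zero_nc.rep_eq tscale_def zero_fun_def)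
next
  case (Suc n) then show ?case
    by (simp add: plus_nc.rep_eq one_nc.rep_eq tscale_def fun_eq_iff algebra_simps)
qed

lemma finite_idx_Collect[simp]: "finite {L \<in> idx d n. Pr L}"
  by (rule finite_subset[OF _ finite_idx]) auto

lemma AA0: "AA d 0 = of_nat d" unfolding AA_def by simp

lemma word_a: assumes "length xs = r" "0 < r"
  shows "pathw (xs @ [xs ! 0]) = map (\<lambda>k. E (xs ! k) (xs ! ((k + 1) mod r))) [0..<r]"
proof -
  have "pathw (xs @ [xs ! 0]) = map (\<lambda>k. E ((xs @ [xs ! 0]) ! k) ((xs @ [xs ! 0]) ! (k + 1))) [0..<r]"
    using assms by (simp add: pathw_map)
  also have "\<dots> = map (\<lambda>k. E (xs ! k) (xs ! ((k + 1) mod r))) [0..<r]"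
  proof (rule map_cong[OF refl])
    fix k assume "k \<in> set [0..<r]"
    then have k: "k < r" by simp
    show "E ((xs @ [xs ! 0]) ! k) ((xs @ [xs ! 0]) ! (k + 1)) = E (xs ! k) (xs ! ((k + 1) mod r))"
    proof (cases "k + 1 < r")
      case True then show ?thesis using k assms by (simp add: nth_append)
    next
      case False then have "k + 1 = r" using k by simp
      then show ?thesis using k assms by (simp add: nth_append)
    qed
  qed
  finally show ?thesis .
qed

lemma image_a: assumes "0 < r"
  shows "(\<lambda>xs. xs @ [xs ! 0]) ` idx d r = {L \<in> idx d (Suc r). L ! 0 = L ! r}"
proof (intro equalityI subsetI)
  fix L assume "L \<in> (\<lambda>xs. xs @ [xs ! 0]) ` idx d r"
  then obtain xs where L: "L = xs @ [xs ! 0]" "xs \<in> idx d r" by auto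
  have lx: "length xs = r" and bx: "\<forall>i\<in>set xs. i < d" using L(2) unfolding idx_def by auto
  have x0: "xs ! 0 \<in> set xs" using assms lx by (intro nth_mem) simp
  have "length L = Suc r" unfolding L(1) using lx by simp
  moreover have "\<forall>i\<in>set L. i < d" unfolding L(1) using bx x0 by auto
  moreover have "L ! 0 = xs ! 0" unfolding L(1) using assms lx by (simp add: nth_append)
  moreover have "L ! r = xs ! 0" unfolding L(1) using lx by (simp add: nth_append)
  ultimately show "L \<in> {L \<in> idx d (Suc r). L ! 0 = L ! r}" unfolding idx_def by simp
next
  fix L assume L: "L \<in> {L \<in> idx d (Suc r). L ! 0 = L ! r}"
  then have len: "length L = Suc r" unfolding idx_def by auto
  have t1: "take (Suc r) L = take r L @ [L ! r]" by (rule take_Suc_conv_app_nth) (simp add: len)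
  have t2: "take (Suc r) L = L" using len by simp
  have e: "L = take r L @ [L ! r]" using t2[symmetric] t1 by (rule trans)
  have l0: "L ! 0 = L ! r" using L by simp
  have "take r L ! 0 = L ! 0" using assms by simp
  then have h: "L ! r = take r L ! 0" using l0 by simp
  have "take r L @ [L ! r] = take r L @ [take r L ! 0]" by (simp only: h)
  with e have ee: "L = take r L @ [take r L ! 0]" by (rule trans)
  have "take r L \<in> idx d r" using L len unfolding idx_def by (auto dest: in_set_takeD)
  with ee show "L \<in> (\<lambda>xs. xs @ [xs ! 0]) ` idx d r" by (rule image_eqI)
qed

lemma a_el_eq: "a_el d r = Rep_nc (AA d r)"
proof (cases "r = 0")
  case True then show ?thesis by (simp add: a_el_def AA0 Rep_of_nat)
next
  case False
  then have r: "0 < r" by simp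
  have inj: "inj_on (\<lambda>xs. xs @ [xs ! 0]) (idx d r)"
    unfolding inj_on_def idx_def by auto
  have "a_el d r = (\<Sum>xs\<in>idx d r. mon (pathw (xs @ [xs ! 0])))"
    unfolding a_el_def using False
  proof (simp only: if_False, intro sum.cong refl)
    fix xs assume "xs \<in> idx d r"
    then have l: "length xs = r" unfolding idx_def by auto
    show "mon (map (\<lambda>k. E (xs ! k) (xs ! ((k + 1) mod r))) [0..<r]) = mon (pathw (xs @ [xs ! 0]))"
      by (simp only: word_a[OF l r])
  qed
  also have "\<dots> = (\<Sum>L\<in>{L \<in> idx d (Suc r). L ! 0 = L ! r}. mon (pathw L))"
    using sum.reindex[OF inj, of "\<lambda>L. mon (pathw L)"] image_a[OF r, of d] by (simp add: comp_def)
  also have "{L \<in> idx d (Suc r). L ! 0 = L ! r} = (\<Union>i\<in>{..<d}. PS d r i i)"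
  proof (intro equalityI subsetI)
    fix L assume L: "L \<in> {L \<in> idx d (Suc r). L ! 0 = L ! r}"
    then have "L ! 0 < d" unfolding idx_def by (auto simp: length_Suc_conv)
    then show "L \<in> (\<Union>i\<in>{..<d}. PS d r i i)" using L unfolding PS_def by auto
  qed (auto simp: PS_def)
  also have "(\<Sum>L\<in>(\<Union>i\<in>{..<d}. PS d r i i). mon (pathw L)) = (\<Sum>i<d. \<Sum>L\<in>PS d r i i. mon (pathw L))"
    by (rule sum.UNION_disjoint) (auto simp: finite_PS PS_def)
  also have "\<dots> = Rep_nc (AA d r)"
    unfolding AA_def Rep_nc_sum by (intro sum.cong refl) (simp add: MM_closed Rep_nc_sum monn.rep_eq)
  finally show ?thesis .
qed

lemma b_el_eq: "b_el d s = Rep_nc (BB d s)"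
proof -
  define F where "F L = pp (L ! 0) * monn (pathw L) * qq (L ! s)" for L
  have w: "Rep_nc (F xs) = mon ([P (xs ! 0)] @ map (\<lambda>k. E (xs ! k) (xs ! (k + 1))) [0..<s] @ [Q (xs ! s)])"
    if "xs \<in> idx d (Suc s)" for xs
  proof -
    have "length xs = Suc s" using that unfolding idx_def by auto
    then have "pathw xs = map (\<lambda>k. E (xs ! k) (xs ! (k + 1))) [0..<s]" by (simp add: pathw_map)
    then show ?thesis unfolding F_def pp_def qq_def
      by (simp add: monn_append[symmetric] monn.rep_eq)
  qed
  have "b_el d s = Rep_nc (\<Sum>L\<in>idx d (Suc s). F L)"
    unfolding b_el_def Rep_nc_sum using w by (intro sum.cong refl) simp
  also have "idx d (Suc s) = (\<Union>i\<in>{..<d}. \<Union>j\<in>{..<d}. PS d s i j)"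
  proof (intro equalityI subsetI)
    fix L assume L: "L \<in> idx d (Suc s)"
    then have len: "length L = Suc s" and b: "\<forall>i\<in>set L. i < d" unfolding idx_def by auto
    then have "L ! 0 \<in> set L" "L ! s \<in> set L" by (auto intro!: nth_mem)
    then have "L ! 0 < d" "L ! s < d" using b by auto
    then show "L \<in> (\<Union>i\<in>{..<d}. \<Union>j\<in>{..<d}. PS d s i j)" using L unfolding PS_def by auto
  qed (auto simp: PS_def)
  also have "(\<Sum>L\<in>(\<Union>i\<in>{..<d}. \<Union>j\<in>{..<d}. PS d s i j). F L) = (\<Sum>i<d. \<Sum>L\<in>(\<Union>j\<in>{..<d}. PS d s i j). F L)"
    by (rule sum.UNION_disjoint) (auto simp: finite_PS PS_def)
  also have "\<dots> = (\<Sum>i<d. \<Sum>j<d. \<Sum>L\<in>PS d s i j. F L)"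
    by (intro sum.cong refl sum.UNION_disjoint) (auto simp: finite_PS PS_def)
  also have "\<dots> = BB d s"
  proof -
    have "(\<Sum>L\<in>PS d s i j. F L) = pp i * MM d s i j * qq j" if "i < d" "j < d" for i j
    proof -
      have "(\<Sum>L\<in>PS d s i j. F L) = (\<Sum>L\<in>PS d s i j. pp i * monn (pathw L) * qq j)"
        by (intro sum.cong refl) (simp add: F_def PS_def)
      then show ?thesis using that by (simp add: MM_closed sum_distrib_left sum_distrib_right)
    qed
    then show ?thesis unfolding BB_def VV_def
      by (simp add: sum_distrib_left mult.assoc)
  qed
  finally show ?thesis .
qed

lemma Yeq_of: "cgr d X Y \<Longrightarrow> Yeq d (Rep_nc X) (Rep_nc Y)"
  unfolding Yeq_def cgr_def by (metis Jn_qhr minus_nc.rep_eq)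

lemma tcomm_rep: "tcomm (Rep_nc X) (Rep_nc Y) = Rep_nc (comm X Y)"
  by (simp add: tcomm_def comm_def minus_nc.rep_eq times_nc.rep_eq)

theorem proposition3p17:
  fixes d :: nat
  shows "\<forall>r s.
      Yeq d (tcomm (a_el d r) (a_el d s)) 0
    \<and> Yeq d (tcomm (a_el d 1) (b_el d s)) (b_el d s)
    \<and> Yeq d (tcomm (a_el d (Suc r)) (b_el d s) - tcomm (a_el d r) (b_el d (Suc s)))
            (b_el d (r + s) - (\<Sum>t<r. b_el d (r + s - t - 1) \<cdot> a_el d t))
    \<and> Yeq d (tcomm (b_el d (Suc r)) (b_el d s) - tcomm (b_el d r) (b_el d (Suc s)))
            (b_el d r \<cdot> b_el d s + b_el d s \<cdot> b_el d r)"
proof (intro allI conjI)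
  fix r s
  show "Yeq d (tcomm (a_el d r) (a_el d s)) 0"
    using Yeq_of[OF Y.rel1[of d r s]] by (simp add: a_el_eq tcomm_rep zero_nc.rep_eq)
  have c0: "comm (AA d 0) x = 0" for x by (simp add: AA0 comm_def mult_of_nat_commute)
  have "cgr d (comm (AA d 1) (BB d s)) (BB d s)"
    using Y.rel3[of d 0 s] by (simp add: c0)
  then show "Yeq d (tcomm (a_el d 1) (b_el d s)) (b_el d s)"
    using Yeq_of by (simp add: a_el_eq b_el_eq tcomm_rep)
  show "Yeq d (tcomm (a_el d (Suc r)) (b_el d s) - tcomm (a_el d r) (b_el d (Suc s)))
            (b_el d (r + s) - (\<Sum>t<r. b_el d (r + s - t - 1) \<cdot> a_el d t))"
    using Yeq_of[OF Y.rel3[of d r s]]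
    by (simp add: a_el_eq b_el_eq tcomm_rep minus_nc.rep_eq times_nc.rep_eq Rep_nc_sum)
  show "Yeq d (tcomm (b_el d (Suc r)) (b_el d s) - tcomm (b_el d r) (b_el d (Suc s)))
            (b_el d r \<cdot> b_el d s + b_el d s \<cdot> b_el d r)"
    using Yeq_of[OF Y.rel4[of d r s]]
    by (simp add: b_el_eq tcomm_rep minus_nc.rep_eq plus_nc.rep_eq times_nc.rep_eq)
qed


end
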